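(* Let $(X,\mathcal{T})$ be a connected door space and let $A,B$ be disjoint nonempty subsets of $X$ with $A$ open and $B$ closed. Then for every $C\subseteq X\setminus(A\cup B)$, the set $A\cup C$ is open and the set $B\cup C$ is closed.
   Context: A topological space $(X,\mathcal{T})$ is a connected door space if every proper nonempty subset of $X$ (i.e. every $A$ with $\varnothing\ne A\subsetneq X$) is either open or closed, but not both. *)

theory Defs
  imports "HOL-Analysis.Analysis"
begin

definition connected_door_space :: "'a topology \<Rightarrow> bool" where
  "connected_door_space T \<longleftrightarrow>
     (\<forall>A. A \<noteq> {} \<and> A \<subset> topspace T \<longrightarrow> (openin T A \<noteq> closedin T A))"

end

theory Submission
  imports Defs
begin

theorem lemma1:
  fixes T :: "'a topology" and A B C :: "'a set"
  assumes "connected_door_space T"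
    and "A \<subseteq> topspace T" and "B \<subseteq> topspace T"
    and "A \<inter> B = {}" and "A \<noteq> {}" and "B \<noteq> {}"
    and "openin T A" and "closedin T B"
    and "C \<subseteq> topspace T - (A \<union> B)"
  shows "openin T (A \<union> C) \<and> closedin T (B \<union> C)"
proof -
  let ?X = "topspace T"
  have door: "\<And>S. S \<noteq> {} \<Longrightarrow> S \<subset> ?X \<Longrightarrow> openin T S \<noteq> closedin T S"
    using assms(1) unfolding connected_door_space_def by blast
  have Aprop: "A \<subset> ?X" using assms by blast
  have Bprop: "B \<subset> ?X" using assms by blast
  have Anc: "\<not> closedin T A" using door[OF assms(5) Aprop] assms(7) by blast
  have Bno: "\<not> openin T B" using door[OF assms(6) Bprop] assms(8) by blast
  have 1: "openin T (A \<union> C)"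
  proof (rule ccontr)
    assume no: "\<not> openin T (A \<union> C)"
    have p: "A \<union> C \<subset> ?X" using assms by blast
    have cl: "closedin T (A \<union> C)" using door[OF _ p] no assms(5) by blast
    have ne: "C \<noteq> {}" using no assms(7) by auto
    show False
    proof (cases "openin T (A \<union> B)")
      case True
      have o2: "openin T (?X - (A \<union> C))" using cl by (simp add: closedin_def)
      have "B = (A \<union> B) \<inter> (?X - (A \<union> C))" using assms by blast
      then have "openin T B" using True o2 by (metis openin_Int)
      with Bno show False by blast
    next
      case False
      have p2: "A \<union> B \<subset> ?X" using assms ne by blast
      have "closedin T (A \<union> B)" using door[OF _ p2] False assms(5) by blast
      moreover have "A = (A \<union> B) \<inter> (A \<union> C)" using assms by blast
      ultimately have "closedin T A" using cl by (metis closedin_Int)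
      with Anc show False by blast
    qed
  qed
  have 2: "closedin T (B \<union> C)"
  proof (rule ccontr)
    assume no: "\<not> closedin T (B \<union> C)"
    have p: "B \<union> C \<subset> ?X" using assms by blast
    have op: "openin T (B \<union> C)" using door[OF _ p] no assms(6) by blast
    have ne: "C \<noteq> {}" using no assms(8) by auto
    show False
    proof (cases "closedin T (A \<union> B)")
      case True
      have c2: "closedin T (?X - (B \<union> C))" using op by (simp add: closedin_diff)
      have "A = (A \<union> B) \<inter> (?X - (B \<union> C))" using assms by blast
      then have "closedin T A" using True c2 by (metis closedin_Int)
      with Anc show False by blast
    next
      case False
      have p2: "A \<union> B \<subset> ?X" using assms ne by blast
      have "openin T (A \<union> B)" using door[OF _ p2] False assms(5) by blast
      moreover have "B = (A \<union> B) \<inter> (B \<union> C)" using assms by blast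
      ultimately have "openin T B" using op by (metis openin_Int)
      with Bno show False by blast
    qed
  qed
  show ?thesis using 1 2 by blast
qed

end
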